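(* Let $G$ be a graph with minimum degree at least $2$ and maximum degree at most $4$, let $k$ be an integer, and write $r(G,k) = k - |V(G)|/3$. Let $C,H$ be a general crown in $G$ such that $G-C-H$ has minimum degree at least $2$, and let $(G',k')$ be obtained as follows: (i) if $C,H$ is a proper crown, $G' = G - (C\cup H)$ and $k' = k-|H|$; (ii) if $C,H$ is an almost crown and $H$ is not an independent set, $G' = G-(C\cup H)$ and $k' = k-|H|$; (iii) if $C,H$ is an almost crown and $H$ is an independent set, $G'$ is obtained from $G$ by merging the vertices of $C\cup H$ into a single vertex, and $k' = k-(|H|-1)$. Then in each case $r(G',k') \le r(G,k)$.
   Context: All graphs are finite, simple and undirected. A general crown in $G$ is a pair $C,H$ of disjoint nonempty subsets of $V(G)$ such that every vertex of $C$ has degree $0$ in $G-H$ (i.e., all neighbors of vertices of $C$ lie in $H$). A proper crown is a general crown $C,H$ for which there is a matching between $C$ and $H$ of size $|H|$. An almost crown is a general crown $C,H$ with $|H| = |C|+1$ and $|N(S)|\ge |S|+1$ for every nonempty $S\subseteq C$, where $N(S) = (\bigcup_{v\in S}N(v))\setminus S$. For a set $S$ of vertices, $G-S$ is the graph obtained by deleting $S$ and all incident edges. Merging a set $S$ of vertices means deleting $S$ and adding a new vertex $v^*$ adjacent exactly to those remaining vertices that had a neighbor in $S$. *)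

theory Defs
  imports Complex_Main
begin

type_synonym 'a graph = "'a set \<times> 'a set set"

definition verts :: "'a graph \<Rightarrow> 'a set" where "verts G = fst G"
definition edges :: "'a graph \<Rightarrow> 'a set set" where "edges G = snd G"

definition simple_graph :: "'a graph \<Rightarrow> bool" where
  "simple_graph G \<longleftrightarrow> finite (verts G) \<and>
     (\<forall>e\<in>edges G. \<exists>u v. e = {u, v} \<and> u \<noteq> v \<and> u \<in> verts G \<and> v \<in> verts G)"

definition nbrs :: "'a graph \<Rightarrow> 'a \<Rightarrow> 'a set" where
  "nbrs G v = {u \<in> verts G. {u, v} \<in> edges G}"

definition degree :: "'a graph \<Rightarrow> 'a \<Rightarrow> nat" where
  "degree G v = card (nbrs G v)"

definition min_degree_ge :: "'a graph \<Rightarrow> nat \<Rightarrow> bool" where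
  "min_degree_ge G d \<longleftrightarrow> (\<forall>v\<in>verts G. d \<le> degree G v)"

definition max_degree_le :: "'a graph \<Rightarrow> nat \<Rightarrow> bool" where
  "max_degree_le G d \<longleftrightarrow> (\<forall>v\<in>verts G. degree G v \<le> d)"

definition nbr_set :: "'a graph \<Rightarrow> 'a set \<Rightarrow> 'a set" where
  "nbr_set G S = (\<Union>v\<in>S. nbrs G v) - S"

definition del_verts :: "'a graph \<Rightarrow> 'a set \<Rightarrow> 'a graph" where
  "del_verts G S = (verts G - S, {e \<in> edges G. e \<inter> S = {}})"

text \<open>Merge S into a new vertex w (w is assumed not to be a vertex of G).\<close>
definition merge_verts :: "'a graph \<Rightarrow> 'a set \<Rightarrow> 'a \<Rightarrow> 'a graph" where
  "merge_verts G S w =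
     ((verts G - S) \<union> {w},
      {e \<in> edges G. e \<inter> S = {}} \<union>
      {{u, w} | u. u \<in> verts G - S \<and> (\<exists>s\<in>S. {u, s} \<in> edges G)})"

definition independent_set :: "'a graph \<Rightarrow> 'a set \<Rightarrow> bool" where
  "independent_set G S \<longleftrightarrow> (\<forall>u\<in>S. \<forall>v\<in>S. {u, v} \<notin> edges G)"

definition general_crown :: "'a graph \<Rightarrow> 'a set \<Rightarrow> 'a set \<Rightarrow> bool" where
  "general_crown G C H \<longleftrightarrow> C \<subseteq> verts G \<and> H \<subseteq> verts G \<and> C \<inter> H = {} \<and>
     C \<noteq> {} \<and> H \<noteq> {} \<and> (\<forall>v\<in>C. nbrs G v \<subseteq> H)"

definition is_matching :: "'a graph \<Rightarrow> 'a set set \<Rightarrow> bool" where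
  "is_matching G M \<longleftrightarrow> M \<subseteq> edges G \<and> (\<forall>e1\<in>M. \<forall>e2\<in>M. e1 \<noteq> e2 \<longrightarrow> e1 \<inter> e2 = {})"

definition proper_crown :: "'a graph \<Rightarrow> 'a set \<Rightarrow> 'a set \<Rightarrow> bool" where
  "proper_crown G C H \<longleftrightarrow> general_crown G C H \<and>
     (\<exists>M. is_matching G M \<and> (\<forall>e\<in>M. \<exists>c\<in>C. \<exists>h\<in>H. e = {c, h}) \<and> card M = card H)"

definition almost_crown :: "'a graph \<Rightarrow> 'a set \<Rightarrow> 'a set \<Rightarrow> bool" where
  "almost_crown G C H \<longleftrightarrow> general_crown G C H \<and> card H = card C + 1 \<and>
     (\<forall>S. S \<subseteq> C \<and> S \<noteq> {} \<longrightarrow> card (nbr_set G S) \<ge> card S + 1)"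

definition r_measure :: "'a graph \<Rightarrow> int \<Rightarrow> real" where
  "r_measure G k = real_of_int k - real (card (verts G)) / 3"

end

theory Submission
  imports Defs
begin

lemma crown_count:
  fixes G :: "'a graph"
  assumes "simple_graph G" "min_degree_ge G 2" "max_degree_le G 4" "general_crown G C H"
  shows "card C \<le> 2 * card H"
proof -
  have fin: "finite (verts G)" using assms(1) by (simp add: simple_graph_def)
  have CV: "C \<subseteq> verts G" and HV: "H \<subseteq> verts G" and nb: "\<forall>v\<in>C. nbrs G v \<subseteq> H"
    using assms(4) by (auto simp: general_crown_def)
  have fC: "finite C" and fH: "finite H" using fin CV HV finite_subset by auto
  define R where "R = (\<lambda>h c. {h, c} \<in> edges G)"
  have eq1: "nbrs G c = {h\<in>H. R h c}" if "c \<in> C" for c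
    using nb that HV by (auto simp: nbrs_def R_def)
  have "2 * card C = (\<Sum>c\<in>C. 2)" by simp
  also have "\<dots> \<le> (\<Sum>c\<in>C. card (nbrs G c))"
    apply (rule sum_mono) using assms(2) CV by (auto simp: min_degree_ge_def degree_def)
  also have "\<dots> = (\<Sum>c\<in>C. card {h\<in>H. R h c})" using eq1 by simp
  also have "\<dots> = (\<Sum>c\<in>C. \<Sum>h\<in>H. if R h c then 1 else 0)"
    using fH by (simp add: sum.If_cases Collect_conj_eq Int_commute)
  also have "\<dots> = (\<Sum>h\<in>H. \<Sum>c\<in>C. if R h c then 1 else 0)" by (rule sum.swap)
  also have "\<dots> = (\<Sum>h\<in>H. card {c\<in>C. R h c})"
    using fC by (simp add: sum.If_cases Collect_conj_eq Int_commute)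
  also have "\<dots> \<le> (\<Sum>h\<in>H. card (nbrs G h))"
  proof (rule sum_mono)
    fix h assume "h \<in> H"
    have "{c\<in>C. R h c} \<subseteq> nbrs G h" using CV by (auto simp: nbrs_def R_def insert_commute)
    moreover have "finite (nbrs G h)" using fin by (simp add: nbrs_def)
    ultimately show "card {c\<in>C. R h c} \<le> card (nbrs G h)" by (rule card_mono[rotated])
  qed
  also have "\<dots> \<le> (\<Sum>h\<in>H. 4)"
    apply (rule sum_mono) using assms(3) HV by (auto simp: max_degree_le_def degree_def)
  also have "\<dots> = 4 * card H" by simp
  finally show ?thesis by simp
qed

theorem lemma2:
  fixes G :: "'a graph" and C H :: "'a set" and k :: int
  assumes "simple_graph G"
    and "min_degree_ge G 2"
    and "max_degree_le G 4"
    and "general_crown G C H"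
    and "min_degree_ge (del_verts G (C \<union> H)) 2"
  shows "(proper_crown G C H \<longrightarrow>
            r_measure (del_verts G (C \<union> H)) (k - int (card H)) \<le> r_measure G k)
       \<and> (almost_crown G C H \<and> \<not> independent_set G H \<longrightarrow>
            r_measure (del_verts G (C \<union> H)) (k - int (card H)) \<le> r_measure G k)
       \<and> (\<forall>w. w \<notin> verts G \<longrightarrow> almost_crown G C H \<and> independent_set G H \<longrightarrow>
            r_measure (merge_verts G (C \<union> H) w) (k - (int (card H) - 1)) \<le> r_measure G k)"
proof -
  have fin: "finite (verts G)" using assms(1) by (simp add: simple_graph_def)
  have CV: "C \<subseteq> verts G" and HV: "H \<subseteq> verts G" and dj: "C \<inter> H = {}" and Hne: "H \<noteq> {}"
    using assms(4) by (auto simp: general_crown_def)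
  have fC: "finite C" and fH: "finite H" using fin CV HV finite_subset by auto
  have cH: "card H \<ge> 1" using Hne fH by (simp add: Suc_le_eq card_gt_0_iff)
  have cCH: "card (C \<union> H) = card C + card H" using card_Un_disjoint[OF fC fH dj] .
  have cd: "card (verts G - (C \<union> H)) = card (verts G) - (card C + card H)"
    using card_Diff_subset[of "C \<union> H" "verts G"] fC fH CV HV cCH by auto
  have le: "card C + card H \<le> card (verts G)"
    using card_mono[OF fin, of "C \<union> H"] CV HV cCH by auto
  have cnt: "card C \<le> 2 * card H" using crown_count[OF assms(1-4)] .
  have A: "r_measure (del_verts G (C \<union> H)) (k - int (card H)) \<le> r_measure G k"
  proof -
    have rc: "real (card C) \<le> 2 * real (card H)" using cnt by linarith
    have "card (verts (del_verts G (C \<union> H))) = card (verts G) - (card C + card H)"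
      using cd by (simp add: del_verts_def verts_def)
    then have "real (card (verts (del_verts G (C \<union> H)))) = real (card (verts G)) - real (card C) - real (card H)"
      using le by (simp add: of_nat_diff)
    then show ?thesis using rc by (simp add: r_measure_def field_simps)
  qed
  have B: "r_measure (merge_verts G (C \<union> H) w) (k - (int (card H) - 1)) \<le> r_measure G k"
    if "w \<notin> verts G" "almost_crown G C H" for w
  proof -
    have cc: "card H = card C + 1" using that(2) by (simp add: almost_crown_def)
    have fd: "finite (verts G - (C \<union> H))" using fin by simp
    have "card (verts (merge_verts G (C \<union> H) w)) = card (verts G - (C \<union> H)) + 1"
      using that(1) fd by (simp add: merge_verts_def verts_def)
    then have "real (card (verts (merge_verts G (C \<union> H) w))) = real (card (verts G)) - 2 * real (card C)"
      using cd le cc by (simp add: of_nat_diff)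
    then show ?thesis using cc by (simp add: r_measure_def field_simps)
  qed
  show ?thesis using A B by blast
qed

end
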